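(* Let $Z$ be a continuous random variable with density $f$, CDF $F$, finite expectation, and support unbounded on the right. Let $\alpha\in[0,1)$ and suppose $h_\alpha(z)\le C$ for all $z\in\mathbb{R}$. Run GBPA with the stochastically smoothed potential $\tilde\Phi$ with perturbation $Z$. Then for every gain sequence $g_1,\dots,g_T\in[-1,0]^N$ and every round $t$, $$\mathbb{E}\big[D_{\tilde\Phi}(\hat G_t,\hat G_{t-1}) \,\big|\, i_1,\dots,i_{t-1}\big] \le \frac{2C}{1-\alpha}\, N.$$
   Context: Generalized hazard rate: for $\alpha\in[0,1)$, $h_\alpha(z) = \frac{f(z)|z|^\alpha}{(1-F(z))^{1-\alpha}}$. Adversarial multi-armed bandit: $N$ arms, $T$ rounds; an oblivious adversary fixes $g_1,\dots,g_T \in [-1,0]^N$ in advance. The stochastically smoothed potential is $\tilde\Phi(G) = \mathbb{E}[\max_{i}(G_i + Z_i)]$ for $G\in\mathbb{R}^N$, $Z_1,\dots,Z_N$ i.i.d. copies of $Z$; $\nabla_i\tilde\Phi(G) = \mathbb{P}(i = \arg\max_j (G_j+Z_j))$. GBPA$(\tilde\Phi)$: $\hat G_0 = 0$; for $t=1,\dots,T$: $p_t = \nabla\tilde\Phi(\hat G_{t-1})$, draw $i_t \sim p_t$, observe only $g_{t,i_t}$, set $\hat g_t = \frac{g_{t,i_t}}{p_{t,i_t}} e_{i_t}$, $\hat G_t = \hat G_{t-1} + \hat g_t$. Bregman divergence: $D_{\tilde\Phi}(x,y) = \tilde\Phi(x)-\tilde\Phi(y)-\langle\nabla\tilde\Phi(y),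 x-y\rangle$. *)

theory Defs
  imports "HOL-Probability.Probability"
begin

definition Zdist :: "(real \<Rightarrow> real) \<Rightarrow> real measure" where
  "Zdist f = density lborel (\<lambda>x. ennreal (f x))"

definition cdf_of :: "(real \<Rightarrow> real) \<Rightarrow> real \<Rightarrow> real" where
  "cdf_of f z = measure (Zdist f) {..z}"

text \<open>|z|^a with the convention 0^0 = 1 (Isabelle's powr has 0 powr 0 = 0).\<close>
definition abs_pow :: "real \<Rightarrow> real \<Rightarrow> real" where
  "abs_pow z a = (if z = 0 \<and> a = 0 then 1 else \<bar>z\<bar> powr a)"

definition hazard_rate :: "(real \<Rightarrow> real) \<Rightarrow> real \<Rightarrow> real \<Rightarrow> real" where
  "hazard_rate f \<alpha> z = f z * abs_pow z \<alpha> / (1 - cdf_of f z) powr (1 - \<alpha>)"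

text \<open>Joint law of N i.i.d. copies Z_0, ..., Z_(N-1) (arms are 0..N-1).\<close>
definition Zjoint :: "(real \<Rightarrow> real) \<Rightarrow> nat \<Rightarrow> (nat \<Rightarrow> real) measure" where
  "Zjoint f N = PiM {..<N} (\<lambda>_. Zdist f)"

definition Phi :: "(real \<Rightarrow> real) \<Rightarrow> nat \<Rightarrow> (nat \<Rightarrow> real) \<Rightarrow> real" where
  "Phi f N G = (\<integral>\<omega>. Max ((\<lambda>i. G i + \<omega> i) ` {..<N}) \<partial>Zjoint f N)"

text \<open>grad_i Phi(G) = P(i = argmax_j (G_j + Z_j)).\<close>
definition grad :: "(real \<Rightarrow> real) \<Rightarrow> nat \<Rightarrow> (nat \<Rightarrow> real) \<Rightarrow> nat \<Rightarrow> real" where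
  "grad f N G i = measure (Zjoint f N)
     {\<omega> \<in> space (Zjoint f N). \<forall>j<N. j \<noteq> i \<longrightarrow> G j + \<omega> j < G i + \<omega> i}"

definition bregman :: "(real \<Rightarrow> real) \<Rightarrow> nat \<Rightarrow> (nat \<Rightarrow> real) \<Rightarrow> (nat \<Rightarrow> real) \<Rightarrow> real" where
  "bregman f N x y = Phi f N x - Phi f N y - (\<Sum>i<N. grad f N y i * (x i - y i))"

text \<open>GBPA estimate hat G_s after rounds 1..s, given the gains g (g t i = g_{t,i},
  rounds numbered from 1) and the list of chosen arms hs = [i_1, i_2, ...].\<close>
fun Ghat :: "(real \<Rightarrow> real) \<Rightarrow> nat \<Rightarrow> (nat \<Rightarrow> nat \<Rightarrow> real) \<Rightarrow> nat list \<Rightarrow> nat \<Rightarrow> (nat \<Rightarrow> real)" where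
  "Ghat f N g hs 0 = (\<lambda>_. 0)"
| "Ghat f N g hs (Suc s) =
     (let G = Ghat f N g hs s; i = hs ! s
      in G(i := G i + g (Suc s) i / grad f N G i))"

definition hist_prob :: "(real \<Rightarrow> real) \<Rightarrow> nat \<Rightarrow> (nat \<Rightarrow> nat \<Rightarrow> real) \<Rightarrow> nat list \<Rightarrow> real" where
  "hist_prob f N g hs = (\<Prod>s<length hs. grad f N (Ghat f N g hs s) (hs ! s))"

text \<open>E[ D(hat G_t, hat G_(t-1)) | i_1..i_(t-1) = hs ]: i_t is drawn from p_t = grad Phi(hat G_(t-1)).\<close>
definition cond_exp_bregman :: "(real \<Rightarrow> real) \<Rightarrow> nat \<Rightarrow> (nat \<Rightarrow> nat \<Rightarrow> real) \<Rightarrow> nat \<Rightarrow> nat list \<Rightarrow> real" where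
  "cond_exp_bregman f N g t hs =
     (let G = Ghat f N g hs (t - 1)
      in (\<Sum>i<N. grad f N G i * bregman f N (G(i := G i + g t i / grad f N G i)) G))"

end

theory Submission
  imports Defs
begin


lemma powr_int0:
  fixes c \<alpha> :: real
  assumes "0 \<le> c" "0 \<le> \<alpha>" "\<alpha> < 1"
  shows "(\<integral>\<^sup>+ u. ennreal (indicator {0..c} u * u powr (-\<alpha>)) \<partial>lborel) = ennreal (c powr (1-\<alpha>)/(1-\<alpha>))"
proof -
  have "((\<lambda>x. x powr (-\<alpha>)) has_integral (c powr (-\<alpha>+1) / (-\<alpha>+1))) {0..c}"
    by (rule has_integral_powr_from_0) (use assms in auto)
  from nn_integral_has_integral_lebesgue[OF _ this]
  show ?thesis by (simp add: algebra_simps)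
qed

lemma L1:
  fixes a r \<alpha> :: real
  assumes "0 \<le> r" "0 \<le> \<alpha>" "\<alpha> < 1"
  shows "(\<integral>\<^sup>+ y. ennreal (indicator {a<..<a+r} y * \<bar>y\<bar> powr (-\<alpha>)) \<partial>lborel)
           \<le> ennreal (2 * (r powr (1-\<alpha>)/(1-\<alpha>)))"
proof -
  define h where "h = (\<lambda>u::real. ennreal (indicator {0..r} u * u powr (-\<alpha>)))"
  have hm[measurable]: "h \<in> borel_measurable borel" unfolding h_def by measurable
  have hint: "(\<integral>\<^sup>+ u. h u \<partial>lborel) = ennreal (r powr (1-\<alpha>)/(1-\<alpha>))"
    unfolding h_def by (rule powr_int0) (use assms in auto)
  have pw: "ennreal (indicator {a<..<a+r} y * \<bar>y\<bar> powr (-\<alpha>)) \<le> h (y - max a 0) + h (min (a+r) 0 - y)" for y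
  proof (cases "y \<in> {a<..<a+r}")
    case False then show ?thesis by simp
  next
    case True
    show ?thesis
    proof (cases "y > 0")
      case True
      have "\<bar>y\<bar> powr (-\<alpha>) \<le> (y - max a 0) powr (-\<alpha>)"
        using True \<open>y \<in> _\<close> assms by (intro powr_mono2') auto
      moreover have "y - max a 0 \<in> {0..r}" using True \<open>y \<in> _\<close> assms by auto
      ultimately have "ennreal (indicator {a<..<a+r} y * \<bar>y\<bar> powr (-\<alpha>)) \<le> h (y - max a 0)"
        using \<open>y \<in> _\<close> unfolding h_def by (auto intro: ennreal_leI)
      then show ?thesis by (rule order_trans) simp
    next
      case False
      show ?thesis
      proof (cases "y = 0")
        case True then show ?thesis by simp
      next
        case False
        with \<open>\<not> y > 0\<close> have "y < 0" by simp
        have "\<bar>y\<bar> powr (-\<alpha>) \<le> (min (a+r) 0 - y) powr (-\<alpha>)"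
          using \<open>y<0\<close> \<open>y \<in> _\<close> assms by (intro powr_mono2') auto
        moreover have "min (a+r) 0 - y \<in> {0..r}" using \<open>y<0\<close> \<open>y \<in> _\<close> assms by auto
        ultimately have "ennreal (indicator {a<..<a+r} y * \<bar>y\<bar> powr (-\<alpha>)) \<le> h (min (a+r) 0 - y)"
          using \<open>y \<in> _\<close> unfolding h_def by (auto intro: ennreal_leI)
        then show ?thesis by (rule order_trans) simp
      qed
    qed
  qed
  have "(\<integral>\<^sup>+ y. ennreal (indicator {a<..<a+r} y * \<bar>y\<bar> powr (-\<alpha>)) \<partial>lborel)
     \<le> (\<integral>\<^sup>+ y. h (y - max a 0) + h (min (a+r) 0 - y) \<partial>lborel)"
    by (rule nn_integral_mono) (rule pw)
  also have "\<dots> = (\<integral>\<^sup>+ y. h (y - max a 0) \<partial>lborel) + (\<integral>\<^sup>+ y. h (min (a+r) 0 - y) \<partial>lborel)"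
    by (rule nn_integral_add) measurable
  also have "(\<integral>\<^sup>+ y. h (y - max a 0) \<partial>lborel) = (\<integral>\<^sup>+ u. h u \<partial>lborel)"
    using nn_integral_real_affine[OF hm, of 1 "- max a 0"] by simp
  also have "(\<integral>\<^sup>+ y. h (min (a+r) 0 - y) \<partial>lborel) = (\<integral>\<^sup>+ u. h u \<partial>lborel)"
    using nn_integral_real_affine[OF hm, of "-1" "min (a+r) 0"] by simp
  finally show ?thesis using hint assms
    by (simp add: ennreal_plus[symmetric] del: ennreal_plus)
qed



lemma space_Zdist[simp]: "space (Zdist f) = UNIV" and sets_Zdist[simp]: "sets (Zdist f) = sets borel"
  by (simp_all add: Zdist_def)

lemma surv_eq:
  assumes "prob_space (Zdist f)"
  shows "1 - cdf_of f y = measure (Zdist f) {y<..}"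
proof -
  interpret prob_space "Zdist f" by fact
  have "measure (Zdist f) {y<..} = prob (space (Zdist f) - {..y})"
    by (rule arg_cong[where f="measure (Zdist f)"]) auto
  also have "\<dots> = 1 - prob {..y}" by (rule prob_compl) simp
  finally show ?thesis by (simp add: cdf_of_def)
qed

lemma cdf_mono:
  assumes "prob_space (Zdist f)" "a \<le> y"
  shows "cdf_of f a \<le> cdf_of f y"
proof -
  interpret prob_space "Zdist f" by fact
  show ?thesis unfolding cdf_of_def using assms(2) by (intro finite_measure_mono) auto
qed

lemma hazard_nonneg:
  assumes "\<And>x. f x \<ge> 0"
  shows "hazard_rate f \<alpha> z \<ge> 0"
  using assms unfolding hazard_rate_def abs_pow_def by auto

lemma f_bound:
  fixes f :: "real \<Rightarrow> real"
  assumes f_nonneg: "\<And>x. f x \<ge> 0"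
    and f_prob: "prob_space (Zdist f)"
    and unbounded_right: "\<And>z. cdf_of f z < 1"
    and alpha: "0 \<le> \<alpha>" "\<alpha> < 1"
    and hazard: "\<And>z. hazard_rate f \<alpha> z \<le> C"
    and y: "y \<noteq> 0" "a \<le> y"
  shows "f y \<le> C * (1 - cdf_of f a) powr (1-\<alpha>) * \<bar>y\<bar> powr (-\<alpha>)"
proof -
  have C0: "C \<ge> 0" using hazard_nonneg[of f \<alpha> 0, OF f_nonneg] hazard[of 0] by linarith
  have Sy: "1 - cdf_of f y > 0" using unbounded_right[of y] by simp
  have ap: "abs_pow y \<alpha> = \<bar>y\<bar> powr \<alpha>" using y unfolding abs_pow_def by auto
  have "f y * \<bar>y\<bar> powr \<alpha> / (1 - cdf_of f y) powr (1-\<alpha>) \<le> C"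
    using hazard[of y] unfolding hazard_rate_def ap .
  then have h1: "f y * \<bar>y\<bar> powr \<alpha> \<le> C * (1 - cdf_of f y) powr (1-\<alpha>)"
    using Sy by (simp add: divide_le_eq)
  have "(1 - cdf_of f y) powr (1-\<alpha>) \<le> (1 - cdf_of f a) powr (1-\<alpha>)"
    using cdf_mono[OF f_prob y(2)] Sy alpha by (intro powr_mono2) auto
  have h2: "f y * \<bar>y\<bar> powr \<alpha> \<le> C * (1 - cdf_of f a) powr (1-\<alpha>)"
    by (rule order_trans[OF h1 mult_left_mono[OF _ C0]]) fact
  have "f y = (f y * \<bar>y\<bar> powr \<alpha>) * \<bar>y\<bar> powr (-\<alpha>)"
  proof -
    have "\<bar>y\<bar> powr \<alpha> * \<bar>y\<bar> powr (-\<alpha>) = 1" using y by (simp add: powr_add[symmetric])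
    then show ?thesis by (simp add: mult.assoc)
  qed
  also have "\<dots> \<le> C * (1 - cdf_of f a) powr (1-\<alpha>) * \<bar>y\<bar> powr (-\<alpha>)"
    by (rule mult_right_mono[OF h2]) simp
  finally show ?thesis .
qed

lemma L2:
  fixes f :: "real \<Rightarrow> real"
  assumes f_meas: "f \<in> borel_measurable lborel"
    and f_nonneg: "\<And>x. f x \<ge> 0"
    and f_prob: "prob_space (Zdist f)"
    and unbounded_right: "\<And>z. cdf_of f z < 1"
    and alpha: "0 \<le> \<alpha>" "\<alpha> < 1"
    and hazard: "\<And>z. hazard_rate f \<alpha> z \<le> C"
    and r: "0 \<le> r"
  shows "emeasure (Zdist f) {a<..<a+r} \<le> ennreal (C * (1 - cdf_of f a) powr (1-\<alpha>) * (2 * (r powr (1-\<alpha>)/(1-\<alpha>))))"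
proof -
  have C0: "C \<ge> 0" using hazard_nonneg[of f \<alpha> 0, OF f_nonneg] hazard[of 0] by linarith
  define K where "K = C * (1 - cdf_of f a) powr (1-\<alpha>)"
  have K0: "K \<ge> 0" unfolding K_def using C0 by simp
  have "emeasure (Zdist f) {a<..<a+r} = (\<integral>\<^sup>+ y. ennreal (f y) * indicator {a<..<a+r} y \<partial>lborel)"
    unfolding Zdist_def using f_meas by (subst emeasure_density) auto
  also have "\<dots> \<le> (\<integral>\<^sup>+ y. ennreal K * ennreal (indicator {a<..<a+r} y * \<bar>y\<bar> powr (-\<alpha>)) \<partial>lborel)"
  proof (rule nn_integral_mono_AE)
    show "AE y in lborel. ennreal (f y) * indicator {a<..<a+r} y \<le> ennreal K * ennreal (indicator {a<..<a+r} y * \<bar>y\<bar> powr (-\<alpha>))"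
      using AE_lborel_singleton[of 0]
    proof eventually_elim
      case (elim y)
      show ?case
      proof (cases "y \<in> {a<..<a+r}")
        case True
        have "f y \<le> K * \<bar>y\<bar> powr (-\<alpha>)" unfolding K_def
          using f_bound[OF f_nonneg f_prob unbounded_right alpha hazard elim, of a] True by auto
        then show ?thesis using True K0 by (simp add: ennreal_mult[symmetric] ennreal_leI del: ennreal_mult)
      qed simp
    qed
  qed
  also have "\<dots> = ennreal K * (\<integral>\<^sup>+ y. ennreal (indicator {a<..<a+r} y * \<bar>y\<bar> powr (-\<alpha>)) \<partial>lborel)"
    by (rule nn_integral_cmult) measurable
  also have "\<dots> \<le> ennreal K * ennreal (2 * (r powr (1-\<alpha>)/(1-\<alpha>)))"
    by (intro mult_left_mono L1 r alpha) simp
  also have "\<dots> = ennreal (K * (2 * (r powr (1-\<alpha>)/(1-\<alpha>))))"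
    using K0 alpha by (subst ennreal_mult) auto
  finally show ?thesis unfolding K_def .
qed



lemma comp_meas:
  assumes "k < N"
  shows "(\<lambda>\<omega>. \<omega> k) \<in> borel_measurable (Zjoint f N)"
proof -
  have e: "measurable (PiM {..<N} (\<lambda>_. Zdist f)) (Zdist f) = measurable (PiM {..<N} (\<lambda>_. Zdist f)) borel"
    by (rule measurable_cong_sets) simp_all
  show ?thesis using measurable_component_singleton[of k "{..<N}" "\<lambda>_. Zdist f"] assms
    unfolding e Zjoint_def by simp
qed

lemma setsA:
  assumes "i < N"
  shows "{\<omega> \<in> space (Zjoint f N). \<forall>j<N. j \<noteq> i \<longrightarrow> G j + \<omega> j < G i + \<omega> i + c} \<in> sets (Zjoint f N)"
    and "{\<omega> \<in> space (Zjoint f N). \<forall>j<N. j \<noteq> i \<longrightarrow> G j + \<omega> j \<le> G i + \<omega> i + c} \<in> sets (Zjoint f N)"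
proof -
  have mi: "(\<lambda>\<omega>. G i + \<omega> i + c) \<in> borel_measurable (Zjoint f N)"
    by (intro borel_measurable_add borel_measurable_const comp_meas assms)
  have mj: "(\<lambda>\<omega>. G j + \<omega> j) \<in> borel_measurable (Zjoint f N)" if "j < N" for j
    by (intro borel_measurable_add borel_measurable_const comp_meas that)
  have e1: "{\<omega> \<in> space (Zjoint f N). \<forall>j<N. j \<noteq> i \<longrightarrow> G j + \<omega> j < G i + \<omega> i + c}
     = {\<omega> \<in> space (Zjoint f N). \<forall>j\<in>{..<N}. G j + \<omega> j < G i + \<omega> i + c \<or> j = i}" by auto
  have e2: "{\<omega> \<in> space (Zjoint f N). \<forall>j<N. j \<noteq> i \<longrightarrow> G j + \<omega> j \<le> G i + \<omega> i + c}
     = {\<omega> \<in> space (Zjoint f N). \<forall>j\<in>{..<N}. G j + \<omega> j \<le> G i + \<omega> i + c \<or> j = i}" by auto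
  show "{\<omega> \<in> space (Zjoint f N). \<forall>j<N. j \<noteq> i \<longrightarrow> G j + \<omega> j < G i + \<omega> i + c} \<in> sets (Zjoint f N)"
    unfolding e1
  proof (rule sets.sets_Collect_finite_All)
    fix j assume "j \<in> {..<N}"
    then show "{x \<in> space (Zjoint f N). G j + x j < G i + x i + c \<or> j = i} \<in> sets (Zjoint f N)"
      using borel_measurable_less[OF mj mi, of j] by (cases "j = i") auto
  qed simp
  show "{\<omega> \<in> space (Zjoint f N). \<forall>j<N. j \<noteq> i \<longrightarrow> G j + \<omega> j \<le> G i + \<omega> i + c} \<in> sets (Zjoint f N)"
    unfolding e2
  proof (rule sets.sets_Collect_finite_All)
    fix j assume "j \<in> {..<N}"
    then show "{x \<in> space (Zjoint f N). G j + x j \<le> G i + x i + c \<or> j = i} \<in> sets (Zjoint f N)"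
      using borel_measurable_le[OF mj mi, of j] by (cases "j = i") auto
  qed simp
qed


lemma L4:
  fixes f :: "real \<Rightarrow> real" and G :: "nat \<Rightarrow> real"
  assumes f_prob: "prob_space (Zdist f)"
    and alpha: "0 \<le> \<alpha>" "\<alpha> < 1"
    and iN: "i < N" and I_ne: "{..<N} - {i} \<noteq> {}"
    and K0: "K \<ge> 0"
    and hb: "\<And>a. emeasure (Zdist f) {a<..<a+r} \<le> ennreal (K * S a powr (1-\<alpha>))"
    and hs: "\<And>a. emeasure (Zdist f) {a<..} = ennreal (S a)"
    and Spos: "\<And>a. S a > 0"
    and Aset: "A = {\<omega> \<in> space (Zjoint f N). \<forall>j<N. j \<noteq> i \<longrightarrow> G j + \<omega> j < G i + \<omega> i}"
    and Eset: "E = {\<omega> \<in> space (Zjoint f N). \<forall>j<N. j \<noteq> i \<longrightarrow> G j + \<omega> j \<le> G i + \<omega> i - r}"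
    and ppos: "measure (Zjoint f N) A > 0"
  shows "emeasure (Zjoint f N) (A - E) \<le> ennreal (K * measure (Zjoint f N) A powr (1-\<alpha>))"
proof -
  define M where "M = Zdist f"
  define I where "I = {..<N} - {i}"
  define p where "p = measure (Zjoint f N) A"
  have p0: "p > 0" using ppos p_def by simp
  have NI: "{..<N} = insert i I" and iI: "i \<notin> I" and fI: "finite I" using iN unfolding I_def by auto
  have Ine: "I \<noteq> {}" using I_ne I_def by simp
  interpret PS: product_prob_space "\<lambda>_. M" "{..<N}"
    by (rule product_prob_spaceI) (use f_prob M_def in auto)
  have MPS: "prob_space M" using f_prob M_def by simp
  have PPS: "prob_space (Zjoint f N)" unfolding Zjoint_def by (rule prob_space_PiM) (use f_prob in auto)
  have M1: "emeasure (Zdist f) UNIV = 1" using prob_space.emeasure_space_1[OF f_prob] by simp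
  have P1: "emeasure (Zjoint f N) (space (Zjoint f N)) = 1" using prob_space.emeasure_space_1[OF PPS] .
  have Pdef: "Zjoint f N = PiM (insert i I) (\<lambda>_. M)" unfolding Zjoint_def M_def NI ..
  have Ameas: "A \<in> sets (Zjoint f N)"
  proof -
    have "{\<omega> \<in> space (Zjoint f N). \<forall>j<N. j \<noteq> i \<longrightarrow> G j + \<omega> j < G i + \<omega> i + 0} \<in> sets (Zjoint f N)"
      by (rule setsA(1)[OF iN])
    then show ?thesis unfolding Aset by (simp only: add_0_right)
  qed
  have Emeas: "E \<in> sets (Zjoint f N)"
  proof -
    have "{\<omega> \<in> space (Zjoint f N). \<forall>j<N. j \<noteq> i \<longrightarrow> G j + \<omega> j \<le> G i + \<omega> i + (-r)} \<in> sets (Zjoint f N)"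
      by (rule setsA(2)[OF iN])
    then show ?thesis unfolding Eset by (simp only: diff_conv_add_uminus)
  qed
  define ax where "ax = (\<lambda>x. Max ((\<lambda>j. G j + x j) ` I) - G i)"
  have xin: "x(i:=y) \<in> space (Zjoint f N)" if "x \<in> space (PiM I (\<lambda>_. M))" for x y
    using that unfolding Pdef space_PiM M_def by (auto simp: PiE_def extensional_def)
  have condA: "(x(i:=y) \<in> A) \<longleftrightarrow> ax x < y" if "x \<in> space (PiM I (\<lambda>_. M))" for x y
  proof -
    have "(x(i:=y) \<in> A) \<longleftrightarrow> (\<forall>j\<in>I. G j + x j < G i + y)"
      using xin[OF that] unfolding Aset I_def by auto
    also have "\<dots> \<longleftrightarrow> Max ((\<lambda>j. G j + x j) ` I) < G i + y"
      using fI Ine by (subst Max_less_iff) auto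
    finally show ?thesis unfolding ax_def by linarith
  qed
  have condE: "(x(i:=y) \<in> E) \<longleftrightarrow> ax x + r \<le> y" if "x \<in> space (PiM I (\<lambda>_. M))" for x y
  proof -
    have "(x(i:=y) \<in> E) \<longleftrightarrow> (\<forall>j\<in>I. G j + x j \<le> G i + y - r)"
      using xin[OF that] unfolding Eset I_def by auto
    also have "\<dots> \<longleftrightarrow> Max ((\<lambda>j. G j + x j) ` I) \<le> G i + y - r"
      using fI Ine by (subst Max_le_iff) auto
    finally show ?thesis unfolding ax_def by linarith
  qed
  define c1 where "c1 = K / p powr \<alpha> * (1-\<alpha>)"
  define c2 where "c2 = K / p powr \<alpha> * (\<alpha> * p)"
  have c10: "c1 \<ge> 0" and c20: "c2 \<ge> 0" unfolding c1_def c2_def using K0 alpha p0 by auto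
  define Fm where "Fm = (\<lambda>\<omega>. ennreal c1 * indicator A \<omega> + ennreal c2)"
  have Fm_meas: "Fm \<in> borel_measurable (Zjoint f N)"
    unfolding Fm_def by (intro borel_measurable_add borel_measurable_times_ennreal borel_measurable_const borel_measurable_indicator Ameas)
  have inner: "(\<integral>\<^sup>+ y. Fm (x(i:=y)) \<partial>M) = ennreal (c1 * S (ax x) + c2)"
    if x: "x \<in> space (PiM I (\<lambda>_. M))" for x
  proof -
    have "(\<integral>\<^sup>+ y. Fm (x(i:=y)) \<partial>M) = (\<integral>\<^sup>+ y. ennreal c1 * indicator {ax x<..} y + ennreal c2 \<partial>M)"
      unfolding Fm_def by (intro nn_integral_cong) (simp add: indicator_def condA[OF x])
    also have "\<dots> = (\<integral>\<^sup>+ y. ennreal c1 * indicator {ax x<..} y \<partial>M) + (\<integral>\<^sup>+ y. ennreal c2 \<partial>M)"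
      unfolding M_def by (rule nn_integral_add; intro borel_measurable_times_ennreal borel_measurable_const borel_measurable_indicator; simp)
    also have "\<dots> = ennreal c1 * emeasure M {ax x<..} + ennreal c2"
      by (subst nn_integral_cmult_indicator) (auto simp: M_def M1)
    also have "\<dots> = ennreal (c1 * S (ax x) + c2)"
      using hs[of "ax x"] c10 c20 Spos[of "ax x"] unfolding M_def
      by (simp add: ennreal_mult ennreal_plus)
    finally show ?thesis .
  qed
  have young: "K * S a powr (1-\<alpha>) \<le> c1 * S a + c2" for a
  proof -
    have "S a powr (1-\<alpha>) * p powr \<alpha> \<le> (1-\<alpha>) * S a + \<alpha> * p"
      using Youngs_inequality_0[of "1-\<alpha>" \<alpha> "S a" p] alpha Spos[of a] p0 by auto
    then have "K / p powr \<alpha> * (S a powr (1-\<alpha>) * p powr \<alpha>) \<le> K / p powr \<alpha> * ((1-\<alpha>) * S a + \<alpha> * p)"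
      using K0 p0 by (intro mult_left_mono) auto
    then show ?thesis using p0 unfolding c1_def c2_def by (simp add: field_simps)
  qed
  have "emeasure (Zjoint f N) (A - E) = (\<integral>\<^sup>+ \<omega>. indicator (A - E) \<omega> \<partial>Zjoint f N)"
    by (rule nn_integral_indicator[symmetric]) (rule sets.Diff[OF Ameas Emeas])
  also have "\<dots> = (\<integral>\<^sup>+ x. (\<integral>\<^sup>+ y. indicator (A - E) (x(i:=y)) \<partial>M) \<partial>PiM I (\<lambda>_. M))"
    unfolding Pdef
    by (rule PS.product_nn_integral_insert[OF fI iI])
       (rule borel_measurable_indicator, rule sets.Diff[OF Ameas[unfolded Pdef] Emeas[unfolded Pdef]])
  also have "\<dots> = (\<integral>\<^sup>+ x. emeasure M {ax x<..<ax x + r} \<partial>PiM I (\<lambda>_. M))"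
  proof (rule nn_integral_cong)
    fix x assume x: "x \<in> space (PiM I (\<lambda>_. M))"
    have "(\<integral>\<^sup>+ y. indicator (A - E) (x(i:=y)) \<partial>M) = (\<integral>\<^sup>+ y. indicator {ax x<..<ax x + r} y \<partial>M)"
      by (intro nn_integral_cong) (auto simp: indicator_def condA[OF x] condE[OF x])
    then show "(\<integral>\<^sup>+ y. indicator (A - E) (x(i:=y)) \<partial>M) = emeasure M {ax x<..<ax x + r}"
      by (simp add: M_def)
  qed
  also have "\<dots> \<le> (\<integral>\<^sup>+ x. (\<integral>\<^sup>+ y. Fm (x(i:=y)) \<partial>M) \<partial>PiM I (\<lambda>_. M))"
  proof (rule nn_integral_mono)
    fix x assume x: "x \<in> space (PiM I (\<lambda>_. M))"
    have "emeasure M {ax x<..<ax x + r} \<le> ennreal (K * S (ax x) powr (1-\<alpha>))"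
      using hb M_def by simp
    also have "\<dots> \<le> ennreal (c1 * S (ax x) + c2)" by (rule ennreal_leI) (rule young)
    finally show "emeasure M {ax x<..<ax x + r} \<le> (\<integral>\<^sup>+ y. Fm (x(i:=y)) \<partial>M)"
      using inner[OF x] by simp
  qed
  also have "\<dots> = (\<integral>\<^sup>+ \<omega>. Fm \<omega> \<partial>Zjoint f N)"
    unfolding Pdef
    by (rule PS.product_nn_integral_insert[OF fI iI, symmetric]) (rule Fm_meas[unfolded Pdef])
  also have "\<dots> = ennreal c1 * emeasure (Zjoint f N) A + ennreal c2"
  proof -
    have "(\<integral>\<^sup>+ \<omega>. Fm \<omega> \<partial>Zjoint f N) = (\<integral>\<^sup>+ \<omega>. ennreal c1 * indicator A \<omega> \<partial>Zjoint f N) + (\<integral>\<^sup>+ \<omega>. ennreal c2 \<partial>Zjoint f N)"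
      unfolding Fm_def by (rule nn_integral_add; intro borel_measurable_times_ennreal borel_measurable_const borel_measurable_indicator Ameas)
    also have "\<dots> = ennreal c1 * emeasure (Zjoint f N) A + ennreal c2"
      using Ameas by (simp add: nn_integral_cmult_indicator P1)
    finally show ?thesis .
  qed
  also have "\<dots> = ennreal (c1 * p + c2)"
    using c10 c20 p0 unfolding p_def finite_measure.emeasure_eq_measure[OF prob_space.finite_measure[OF PPS]] by (simp add: ennreal_mult ennreal_plus)
  also have "c1 * p + c2 = K * p powr (1-\<alpha>)"
    using p0 unfolding c1_def c2_def by (simp add: field_simps powr_diff)
  finally show ?thesis unfolding p_def .
qed



lemma int_comp:
  assumes f_prob: "prob_space (Zdist f)" and fm: "integrable (Zdist f) (\<lambda>x. x)" and "k < N"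
  shows "integrable (Zjoint f N) (\<lambda>\<omega>. \<omega> k)"
proof -
  have d: "distr (Zjoint f N) (Zdist f) (\<lambda>\<omega>. \<omega> k) = Zdist f"
    unfolding Zjoint_def by (rule distr_PiM_component) (use f_prob assms(3) in auto)
  have m1: "(\<lambda>\<omega>. \<omega> k) \<in> measurable (Zjoint f N) (Zdist f)"
    unfolding Zjoint_def by (rule measurable_component_singleton) (use assms(3) in auto)
  have m2: "(\<lambda>x::real. x) \<in> borel_measurable (Zdist f)"
    by (simp add: measurable_cong_sets[OF sets_Zdist refl])
  show ?thesis using integrable_distr_eq[OF m1 m2] fm unfolding d by simp
qed

lemma int_max:
  assumes f_prob: "prob_space (Zdist f)" and fm: "integrable (Zdist f) (\<lambda>x. x)" and N: "N \<ge> 1"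
  shows "integrable (Zjoint f N) (\<lambda>\<omega>. Max ((\<lambda>j. G j + \<omega> j) ` {..<N}))"
proof (rule Bochner_Integration.integrable_bound[of _ "\<lambda>\<omega>. (\<Sum>j<N. \<bar>G j\<bar> + \<bar>\<omega> j\<bar>) :: real"])
  show "integrable (Zjoint f N) (\<lambda>\<omega>. \<Sum>j<N. \<bar>G j\<bar> + \<bar>\<omega> j\<bar>)"
  proof (rule Bochner_Integration.integrable_sum)
    have FM: "finite_measure (Zjoint f N)"
      unfolding Zjoint_def by (intro prob_space.finite_measure prob_space_PiM f_prob)
    fix j assume "j \<in> {..<N}"
    then have "integrable (Zjoint f N) (\<lambda>\<omega>. \<omega> j)" using int_comp[OF f_prob fm] by simp
    then have "integrable (Zjoint f N) (\<lambda>\<omega>. \<bar>\<omega> j\<bar>)" by (rule Bochner_Integration.integrable_abs)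
    then show "integrable (Zjoint f N) (\<lambda>\<omega>. \<bar>G j\<bar> + \<bar>\<omega> j\<bar>)"
      by (intro Bochner_Integration.integrable_add finite_measure.integrable_const[OF FM])
  qed
  show "(\<lambda>\<omega>. Max ((\<lambda>j. G j + \<omega> j) ` {..<N})) \<in> borel_measurable (Zjoint f N)"
    by (intro borel_measurable_Max finite_lessThan borel_measurable_add borel_measurable_const comp_meas) simp
  show "AE \<omega> in Zjoint f N. norm (Max ((\<lambda>j. G j + \<omega> j) ` {..<N})) \<le> norm (\<Sum>j<N. \<bar>G j\<bar> + \<bar>\<omega> j\<bar>)"
  proof (rule AE_I2)
    fix \<omega>
    have "Max ((\<lambda>j. G j + \<omega> j) ` {..<N}) \<in> (\<lambda>j. G j + \<omega> j) ` {..<N}"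
      using N by (intro Max_in) (auto simp: lessThan_empty_iff)
    then obtain j where j: "j < N" "Max ((\<lambda>j. G j + \<omega> j) ` {..<N}) = G j + \<omega> j" by auto
    have "\<bar>G j + \<omega> j\<bar> \<le> \<bar>G j\<bar> + \<bar>\<omega> j\<bar>" by simp
    also have "\<dots> \<le> (\<Sum>j<N. \<bar>G j\<bar> + \<bar>\<omega> j\<bar>)"
      using j(1) by (intro member_le_sum) auto
    finally show "norm (Max ((\<lambda>j. G j + \<omega> j) ` {..<N})) \<le> norm (\<Sum>j<N. \<bar>G j\<bar> + \<bar>\<omega> j\<bar>)"
      using j(2) by (simp add: sum_nonneg)
  qed
qed



lemma max_diff:
  fixes G w :: "nat \<Rightarrow> real"
  assumes N: "N \<ge> 1" and iN: "i < N" and r: "r > 0"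
  shows "Max ((\<lambda>j. (G(i := G i - r)) j + w j) ` {..<N}) - Max ((\<lambda>j. G j + w j) ` {..<N})
     \<le> (if (\<forall>j<N. j \<noteq> i \<longrightarrow> G j + w j \<le> G i + w i - r) then - r else 0)"
proof -
  have ne: "{..<N} \<noteq> {}" using N by (auto simp: lessThan_empty_iff)
  have fin1: "finite ((\<lambda>j. (G(i := G i - r)) j + w j) ` {..<N})" by simp
  have fin2: "finite ((\<lambda>j. G j + w j) ` {..<N})" by simp
  have ge: "G j + w j \<le> Max ((\<lambda>j. G j + w j) ` {..<N})" if "j < N" for j
    using that fin2 by (intro Max_ge) auto
  have le1: "Max ((\<lambda>j. (G(i := G i - r)) j + w j) ` {..<N}) \<le> Max ((\<lambda>j. G j + w j) ` {..<N})"
  proof (subst Max_le_iff[OF fin1])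
    show "(\<lambda>j. (G(i := G i - r)) j + w j) ` {..<N} \<noteq> {}" using ne by simp
    show "\<forall>a\<in>(\<lambda>j. (G(i := G i - r)) j + w j) ` {..<N}. a \<le> Max ((\<lambda>j. G j + w j) ` {..<N})"
    proof
      fix a assume "a \<in> (\<lambda>j. (G(i := G i - r)) j + w j) ` {..<N}"
      then obtain j where j: "j < N" "a = (G(i := G i - r)) j + w j" by auto
      have "a \<le> G j + w j" using j r by (cases "j = i") auto
      then show "a \<le> Max ((\<lambda>j. G j + w j) ` {..<N})" using ge[OF j(1)] by linarith
    qed
  qed
  show ?thesis
  proof (cases "\<forall>j<N. j \<noteq> i \<longrightarrow> G j + w j \<le> G i + w i - r")
    case True
    have "Max ((\<lambda>j. (G(i := G i - r)) j + w j) ` {..<N}) \<le> G i + w i - r"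
    proof (subst Max_le_iff[OF fin1])
      show "(\<lambda>j. (G(i := G i - r)) j + w j) ` {..<N} \<noteq> {}" using ne by simp
      show "\<forall>a\<in>(\<lambda>j. (G(i := G i - r)) j + w j) ` {..<N}. a \<le> G i + w i - r"
        using True by auto
    qed
    moreover have "G i + w i \<le> Max ((\<lambda>j. G j + w j) ` {..<N})" by (rule ge[OF iN])
    ultimately show ?thesis using True by simp
  next
    case False
    show ?thesis using le1 by (simp only: if_not_P[OF False])
  qed
qed

lemma L5:
  fixes f :: "real \<Rightarrow> real" and G :: "nat \<Rightarrow> real"
  assumes f_prob: "prob_space (Zdist f)" and fm: "integrable (Zdist f) (\<lambda>x. x)"
    and N: "N \<ge> 1" and iN: "i < N" and r: "r > 0"
    and Eset: "E = {\<omega> \<in> space (Zjoint f N). \<forall>j<N. j \<noteq> i \<longrightarrow> G j + \<omega> j \<le> G i + \<omega> i - r}"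
  shows "Phi f N (G(i := G i - r)) - Phi f N G \<le> - r * measure (Zjoint f N) E"
proof -
  have Emeas: "E \<in> sets (Zjoint f N)"
  proof -
    have "{\<omega> \<in> space (Zjoint f N). \<forall>j<N. j \<noteq> i \<longrightarrow> G j + \<omega> j \<le> G i + \<omega> i + (-r)} \<in> sets (Zjoint f N)"
      by (rule setsA(2)[OF iN])
    then show ?thesis unfolding Eset by (simp only: diff_conv_add_uminus)
  qed
  have FM: "finite_measure (Zjoint f N)"
    unfolding Zjoint_def by (intro prob_space.finite_measure prob_space_PiM f_prob)
  have Efin: "emeasure (Zjoint f N) E < \<infinity>"
    using finite_measure.emeasure_finite[OF FM, of E] by (simp add: top.not_eq_extremum)
  have i1: "integrable (Zjoint f N) (\<lambda>\<omega>. Max ((\<lambda>j. (G(i := G i - r)) j + \<omega> j) ` {..<N}))"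
    by (rule int_max[OF f_prob fm N])
  have i2: "integrable (Zjoint f N) (\<lambda>\<omega>. Max ((\<lambda>j. G j + \<omega> j) ` {..<N}))"
    by (rule int_max[OF f_prob fm N])
  have i3: "integrable (Zjoint f N) (\<lambda>\<omega>. - r * indicator E \<omega>)"
    by (rule Bochner_Integration.integrable_mult_right) (rule integrable_real_indicator[OF Emeas Efin])
  have "Phi f N (G(i := G i - r)) - Phi f N G
      = (\<integral>\<omega>. Max ((\<lambda>j. (G(i := G i - r)) j + \<omega> j) ` {..<N}) - Max ((\<lambda>j. G j + \<omega> j) ` {..<N}) \<partial>Zjoint f N)"
    unfolding Phi_def by (rule Bochner_Integration.integral_diff[OF i1 i2, symmetric])
  also have "\<dots> \<le> (\<integral>\<omega>. - r * indicator E \<omega> \<partial>Zjoint f N)"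
  proof (rule integral_mono)
    show "integrable (Zjoint f N) (\<lambda>\<omega>. Max ((\<lambda>j. (G(i := G i - r)) j + \<omega> j) ` {..<N}) - Max ((\<lambda>j. G j + \<omega> j) ` {..<N}))"
      by (rule Bochner_Integration.integrable_diff[OF i1 i2])
    show "integrable (Zjoint f N) (\<lambda>\<omega>. - r * indicator E \<omega>)" by (rule i3)
    fix \<omega> assume om: "\<omega> \<in> space (Zjoint f N)"
    have md: "Max ((\<lambda>j. (G(i := G i - r)) j + \<omega> j) ` {..<N}) - Max ((\<lambda>j. G j + \<omega> j) ` {..<N})
     \<le> (if (\<forall>j<N. j \<noteq> i \<longrightarrow> G j + \<omega> j \<le> G i + \<omega> i - r) then - r else 0)"
      by (rule max_diff[OF N iN r])
    show "Max ((\<lambda>j. (G(i := G i - r)) j + \<omega> j) ` {..<N}) - Max ((\<lambda>j. G j + \<omega> j) ` {..<N}) \<le> - r * indicator E \<omega>"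
    proof (cases "\<forall>j<N. j \<noteq> i \<longrightarrow> G j + \<omega> j \<le> G i + \<omega> i - r")
      case True
      then have "\<omega> \<in> E" using om Eset by simp
      then show ?thesis using md by (simp only: if_P[OF True]) simp
    next
      case False
      then have "\<omega> \<notin> E" using Eset by simp
      then show ?thesis using md by (simp only: if_not_P[OF False]) simp
    qed
  qed
  also have "\<dots> = - r * measure (Zjoint f N) E"
    using Emeas by (simp add: sets.Int_space_eq2)
  finally show ?thesis .
qed



lemma term_bound:
  fixes f :: "real \<Rightarrow> real" and \<alpha> C :: real and N :: nat and G :: "nat \<Rightarrow> real"
  assumes f_meas: "f \<in> borel_measurable lborel"
    and f_nonneg: "\<And>x. f x \<ge> 0"
    and f_prob: "prob_space (Zdist f)"
    and finite_mean: "integrable (Zdist f) (\<lambda>x. x)"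
    and unbounded_right: "\<And>z. cdf_of f z < 1"
    and alpha: "0 \<le> \<alpha>" "\<alpha> < 1"
    and hazard: "\<And>z. hazard_rate f \<alpha> z \<le> C"
    and N: "N \<ge> 1" and iN: "i < N"
    and gv: "-1 \<le> gv" "gv \<le> 0"
  shows "grad f N G i * bregman f N (G(i := G i + gv / grad f N G i)) G \<le> 2 * C / (1 - \<alpha>)"
proof -
  have C0: "C \<ge> 0" using hazard_nonneg[of f \<alpha> 0, OF f_nonneg] hazard[of 0] by linarith
  have b0: "0 \<le> 2 * C / (1 - \<alpha>)" using C0 alpha by simp
  define q where "q = grad f N G i"
  define A where "A = {\<omega> \<in> space (Zjoint f N). \<forall>j<N. j \<noteq> i \<longrightarrow> G j + \<omega> j < G i + \<omega> i}"
  have qA: "q = measure (Zjoint f N) A" unfolding q_def A_def grad_def ..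
  have q0: "q \<ge> 0" unfolding qA by simp
  have PPS: "prob_space (Zjoint f N)"
    unfolding Zjoint_def by (rule prob_space_PiM) (use f_prob in auto)
  have FM: "finite_measure (Zjoint f N)" by (rule prob_space.finite_measure[OF PPS])
  show ?thesis
  proof (cases "q = 0 \<or> gv = 0")
    case True
    then show ?thesis
    proof
      assume "q = 0" then show ?thesis using b0 q_def by simp
    next
      assume "gv = 0"
      then have "G(i := G i + gv / grad f N G i) = G" by simp
      then show ?thesis using b0 by (simp add: bregman_def)
    qed
  next
    case False
    then have qp: "q > 0" and gn: "gv < 0" using q0 gv by auto
    define c where "c = - gv"
    define r where "r = c / q"
    have c0: "c > 0" and c1: "c \<le> 1" using gn gv unfolding c_def by auto
    have r0: "r > 0" unfolding r_def using c0 qp by simp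
    have rq: "r * q = c" unfolding r_def using qp by simp
    have xeq: "G(i := G i + gv / grad f N G i) = G(i := G i - r)"
      unfolding r_def c_def q_def by simp
    define E where "E = {\<omega> \<in> space (Zjoint f N). \<forall>j<N. j \<noteq> i \<longrightarrow> G j + \<omega> j \<le> G i + \<omega> i - r}"
    have Ameas: "A \<in> sets (Zjoint f N)"
    proof -
      have "{\<omega> \<in> space (Zjoint f N). \<forall>j<N. j \<noteq> i \<longrightarrow> G j + \<omega> j < G i + \<omega> i + 0} \<in> sets (Zjoint f N)"
        by (rule setsA(1)[OF iN])
      then show ?thesis unfolding A_def by (simp only: add_0_right)
    qed
    have Emeas: "E \<in> sets (Zjoint f N)"
    proof -
      have "{\<omega> \<in> space (Zjoint f N). \<forall>j<N. j \<noteq> i \<longrightarrow> G j + \<omega> j \<le> G i + \<omega> i + (-r)} \<in> sets (Zjoint f N)"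
        by (rule setsA(2)[OF iN])
      then show ?thesis unfolding E_def by (simp only: diff_conv_add_uminus)
    qed
    have EA: "E \<subseteq> A" unfolding E_def A_def using r0 by fastforce
    have sumeq: "(\<Sum>j<N. grad f N G j * ((G(i := G i - r)) j - G j)) = - (q * r)"
    proof -
      have "(\<Sum>j<N. grad f N G j * ((G(i := G i - r)) j - G j)) = (\<Sum>j<N. if j = i then - (q * r) else 0)"
        by (intro sum.cong) (auto simp: q_def)
      also have "\<dots> = - (q * r)" using iN by simp
      finally show ?thesis .
    qed
    have breg: "bregman f N (G(i := G i - r)) G \<le> r * measure (Zjoint f N) (A - E)"
    proof -
      have "bregman f N (G(i := G i - r)) G = Phi f N (G(i := G i - r)) - Phi f N G + q * r"
        unfolding bregman_def sumeq by simp
      also have "\<dots> \<le> - r * measure (Zjoint f N) E + q * r"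
        using L5[OF f_prob finite_mean N iN r0 E_def] by simp
      also have "\<dots> = r * (measure (Zjoint f N) A - measure (Zjoint f N) E)" unfolding qA by (simp add: algebra_simps)
      also have "measure (Zjoint f N) A - measure (Zjoint f N) E = measure (Zjoint f N) (A - E)"
        using finite_measure.finite_measure_Diff[OF FM Ameas Emeas EA] by simp
      finally show ?thesis .
    qed
    define K where "K = C * (2 * (r powr (1-\<alpha>)/(1-\<alpha>)))"
    have K0: "K \<ge> 0" unfolding K_def using C0 alpha by simp
    have mAE: "measure (Zjoint f N) (A - E) \<le> K * q powr (1-\<alpha>)"
    proof (cases "N = 1")
      case True
      then have "i = 0" using iN by simp
      then have e: "A - E = {}" unfolding A_def E_def using True by auto
      show ?thesis unfolding e using K0 q0 by simp
    next
      case False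
      have "(if i = 0 then 1 else 0) \<in> {..<N} - {i}" using False N iN by auto
      then have Ine: "{..<N} - {i} \<noteq> {}" by blast
      have hb: "emeasure (Zdist f) {a<..<a+r} \<le> ennreal (K * (1 - cdf_of f a) powr (1-\<alpha>))" for a
        using L2[OF f_meas f_nonneg f_prob unbounded_right alpha hazard, of r a] r0
        unfolding K_def by (simp add: mult_ac)
      have hs: "emeasure (Zdist f) {a<..} = ennreal (1 - cdf_of f a)" for a
        using surv_eq[OF f_prob, of a] finite_measure.emeasure_eq_measure[OF prob_space.finite_measure[OF f_prob]]
        by simp
      have Spos: "1 - cdf_of f a > 0" for a using unbounded_right[of a] by simp
      have "emeasure (Zjoint f N) (A - E) \<le> ennreal (K * measure (Zjoint f N) A powr (1-\<alpha>))"
        by (rule L4[OF f_prob alpha iN Ine K0 hb hs Spos A_def E_def]) (use qp qA in simp)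
      then show ?thesis
        unfolding finite_measure.emeasure_eq_measure[OF FM] qA
        using K0 by (simp add: ennreal_le_iff)
    qed
    have "r * measure (Zjoint f N) (A - E) \<le> r * (K * q powr (1-\<alpha>))"
      by (rule mult_left_mono[OF mAE]) (use r0 in simp)
    then have "bregman f N (G(i := G i - r)) G \<le> r * (K * q powr (1-\<alpha>))" using breg by linarith
    then have "q * bregman f N (G(i := G i - r)) G \<le> q * (r * (K * q powr (1-\<alpha>)))"
      by (rule mult_left_mono) (rule q0)
    also have "\<dots> = 2 * C / (1 - \<alpha>) * (c * ((r * q) powr (1-\<alpha>)))"
      unfolding K_def rq[symmetric] powr_mult by (simp add: mult_ac divide_inverse)
    also have "\<dots> \<le> 2 * C / (1 - \<alpha>) * 1"
    proof (rule mult_left_mono[OF _ b0])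
      have "(r * q) powr (1-\<alpha>) \<le> 1" unfolding rq using c0 c1 alpha
        using powr_mono2[of "1-\<alpha>" c 1] by simp
      then show "c * ((r * q) powr (1-\<alpha>)) \<le> 1" using c0 c1
        by (intro mult_le_one) auto
    qed
    finally show ?thesis unfolding xeq q_def by simp
  qed
qed


theorem theorem2:
  fixes f :: "real \<Rightarrow> real" and \<alpha> C :: real and N T t :: nat
    and g :: "nat \<Rightarrow> nat \<Rightarrow> real" and hs :: "nat list"
  assumes f_meas: "f \<in> borel_measurable lborel"
    and f_nonneg: "\<And>x. f x \<ge> 0"
    and f_prob: "prob_space (Zdist f)"
    and finite_mean: "integrable (Zdist f) (\<lambda>x. x)"
    and unbounded_right: "\<And>z. cdf_of f z < 1"
    and alpha: "0 \<le> \<alpha>" "\<alpha> < 1"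
    and hazard: "\<And>z. hazard_rate f \<alpha> z \<le> C"
    and N: "N \<ge> 1"
    and gains: "\<And>s i. s \<in> {1..T} \<Longrightarrow> i < N \<Longrightarrow> -1 \<le> g s i \<and> g s i \<le> 0"
    and t: "1 \<le> t" "t \<le> T"
    and hist: "length hs = t - 1" "set hs \<subseteq> {..<N}" "hist_prob f N g hs > 0"
  shows "cond_exp_bregman f N g t hs \<le> 2 * C / (1 - \<alpha>) * real N"
proof -
  define G where "G = Ghat f N g hs (t - 1)"
  have "cond_exp_bregman f N g t hs = (\<Sum>i<N. grad f N G i * bregman f N (G(i := G i + g t i / grad f N G i)) G)"
    unfolding cond_exp_bregman_def G_def Let_def ..
  also have "\<dots> \<le> of_nat (card {..<N}) * (2 * C / (1 - \<alpha>))"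
  proof (rule sum_bounded_above)
    fix i assume "i \<in> {..<N}"
    then have iN: "i < N" by simp
    have "t \<in> {1..T}" using t by simp
    from gains[OF this iN] have "-1 \<le> g t i" "g t i \<le> 0" by auto
    then show "grad f N G i * bregman f N (G(i := G i + g t i / grad f N G i)) G \<le> 2 * C / (1 - \<alpha>)"
      by (rule term_bound[OF f_meas f_nonneg f_prob finite_mean unbounded_right alpha hazard N iN])
  qed
  also have "\<dots> = 2 * C / (1 - \<alpha>) * real N" by simp
  finally show ?thesis .
qed

end
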